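(* Let $N\ge 2$, $1<p<N$, let $B$ be the open unit ball in $\mathbb{R}^N$, and let $u$ be a smooth function with compact support in $B$. Then there exist constants $c_1,c_2>0$, depending only on $p$, $N$ and $|B|$, such that \[ c_1\left(\|u\|_{L^{p^*}(B)}^{p^*}+|B|\right)\le \int_B F_p(u)\,dx\le c_2\left(\|u\|_{L^{p^*}(B)}^{p^*}+|B|\right). \] Furthermore, \[ \int_B F_p(u)\,dx\to \int_B e^{\alpha_N|u|^{\frac{N}{N-1}}}\,dx\quad\text{as } p\to N . \]
   Context: $p^*=Np/(N-p)$. $\omega_{N-1}$ is the surface measure of the unit sphere in $\mathbb{R}^N$ and $\alpha_N=N\omega_{N-1}^{\frac{1}{N-1}}$. For $1<p<N$, $F_p:\mathbb{R}\to\mathbb{R}_+$ is defined by \[ F_p(s)=\left[1+\frac{N-p}{N(p-1)}\alpha_p|s|^{\frac{p}{p-1}}\right]^{\frac{N(p-1)}{N-p}},\qquad \alpha_p=\left(\alpha_N^{\frac{N-1}{N}}|B|^{\frac1p-\frac1N}\right)^{\frac{p}{p-1}} . \] *)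

theory Defs
  imports "HOL-Analysis.Analysis"
begin

fun Ck :: "nat \<Rightarrow> ('a::euclidean_space \<Rightarrow> real) \<Rightarrow> bool" where
  "Ck 0 f = continuous_on UNIV f"
| "Ck (Suc k) f = ((\<forall>x. f differentiable (at x)) \<and>
      (\<forall>v. Ck k (\<lambda>x. frechet_derivative f (at x) v)))"

definition smooth :: "('a::euclidean_space \<Rightarrow> real) \<Rightarrow> bool" where
  "smooth f = (\<forall>k. Ck k f)"

definition compact_support_in :: "('a::euclidean_space \<Rightarrow> real) \<Rightarrow> 'a set \<Rightarrow> bool" where
  "compact_support_in u S = (compact (closure {x. u x \<noteq> 0}) \<and> closure {x. u x \<noteq> 0} \<subseteq> S)"

definition unitB :: "(real ^ ('n::finite)) set" where
  "unitB = ball 0 1"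

definition volB :: "('n::finite) itself \<Rightarrow> real" where
  "volB _ = measure lebesgue (unitB :: (real ^ 'n) set)"

definition dimN :: "('n::finite) itself \<Rightarrow> real" where
  "dimN _ = real CARD('n)"

(* surface measure of the unit sphere S^{N-1}: omega_{N-1} = N |B| *)
definition omega :: "('n::finite) itself \<Rightarrow> real" where
  "omega t = dimN t * volB t"

definition alphaN :: "('n::finite) itself \<Rightarrow> real" where
  "alphaN t = dimN t * omega t powr (1 / (dimN t - 1))"

definition alpha_p :: "('n::finite) itself \<Rightarrow> real \<Rightarrow> real" where
  "alpha_p t p = (alphaN t powr ((dimN t - 1) / dimN t) * volB t powr (1/p - 1/dimN t))
                   powr (p / (p - 1))"

definition pstar :: "('n::finite) itself \<Rightarrow> real \<Rightarrow> real" where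
  "pstar t p = dimN t * p / (dimN t - p)"

definition Fp :: "('n::finite) itself \<Rightarrow> real \<Rightarrow> real \<Rightarrow> real" where
  "Fp t p s = (1 + (dimN t - p) / (dimN t * (p - 1)) * alpha_p t p * \<bar>s\<bar> powr (p / (p - 1)))
                powr (dimN t * (p - 1) / (dimN t - p))"

end

theory Submission
  imports Defs
begin

lemma F_bounds:
  fixes N p a s :: real
  assumes p1: "1 < p" and pN: "p < N" and a0: "a > 0"
  defines "e \<equiv> N * (p - 1) / (N - p)"
  shows "min 1 (a powr e) / 2 * (\<bar>s\<bar> powr (N * p / (N - p)) + 1) \<le> (1 + a * \<bar>s\<bar> powr (p / (p - 1))) powr e"
    and "(1 + a * \<bar>s\<bar> powr (p / (p - 1))) powr e \<le> 2 powr e * max 1 (a powr e) * (\<bar>s\<bar> powr (N * p / (N - p)) + 1)"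
proof -
  define X where "X = a * \<bar>s\<bar> powr (p / (p - 1))"
  define Z where "Z = \<bar>s\<bar> powr (N * p / (N - p))"
  have e0: "e > 0" unfolding e_def using p1 pN by simp
  have X0: "X \<ge> 0" unfolding X_def using a0 by simp
  have Z0: "Z \<ge> 0" unfolding Z_def by simp
  have re: "p / (p - 1) * e = N * p / (N - p)" proof -
    have "p - 1 \<noteq> 0" "N - p \<noteq> 0" using p1 pN by auto
    then show ?thesis unfolding e_def by (simp add: divide_simps)
  qed
  have XE: "X powr e = a powr e * Z"
    unfolding X_def Z_def using a0 by (simp add: powr_mult powr_powr re[symmetric])
  have ae0: "a powr e > 0" using a0 by simp
  have L1: "(1 + X) powr e \<ge> 1" using X0 e0 by (simp add: ge_one_powr_ge_zero)
  have L2: "(1 + X) powr e \<ge> X powr e" using X0 e0 by (intro powr_mono2) auto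
  have "min 1 (a powr e) / 2 * (Z + 1) \<le> (1 + a powr e * Z) / 2"
    using Z0 ae0 by (auto simp: min_def field_simps mult_left_mono)
  also have "\<dots> \<le> (1 + X) powr e" using L1 L2 XE by simp
  finally show "min 1 (a powr e) / 2 * (\<bar>s\<bar> powr (N * p / (N - p)) + 1) \<le> (1 + a * \<bar>s\<bar> powr (p / (p - 1))) powr e"
    unfolding X_def Z_def .
  have "(1 + X) powr e \<le> (2 * max 1 X) powr e" using X0 e0 by (intro powr_mono2) auto
  also have "\<dots> = 2 powr e * max 1 X powr e" using X0 by (simp add: powr_mult)
  also have "max 1 X powr e = max 1 (X powr e)"
  proof (cases "X \<le> 1")
    case True
    then have "X powr e \<le> 1" using X0 e0 by (intro powr_le1) auto
    then show ?thesis using True by (simp add: max_def)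
  next
    case False
    then have "X powr e \<ge> 1" using X0 e0 by (intro ge_one_powr_ge_zero) auto
    then show ?thesis using False by (simp add: max_def)
  qed
  also have "max 1 (X powr e) \<le> max 1 (a powr e) * (Z + 1)"
  proof -
    have m1: "1 \<le> max 1 (a powr e)" by simp
    have "a powr e * Z \<le> max 1 (a powr e) * Z" using Z0 by (intro mult_right_mono) auto
    moreover have "Z \<le> max 1 (a powr e) * Z" using Z0 m1 by (metis mult_right_mono mult_1)
    moreover have "0 \<le> max 1 (a powr e) * Z" using Z0 m1 by simp
    ultimately show ?thesis unfolding XE distrib_left mult_1_right using m1
      by (intro max.boundedI) linarith+
  qed
  finally show "(1 + a * \<bar>s\<bar> powr (p / (p - 1))) powr e \<le> 2 powr e * max 1 (a powr e) * (\<bar>s\<bar> powr (N * p / (N - p)) + 1)"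
    unfolding X_def Z_def by (simp add: mult.assoc mult_left_mono)
qed
lemma volB_pos: "volB (TYPE('n::finite)) > 0"
  unfolding volB_def unitB_def
  using content_ball_pos[of 1 "0::real^'n"] by simp

lemma dimN_ge: "CARD('n::finite) \<ge> 2 \<Longrightarrow> dimN TYPE('n) \<ge> 2"
  unfolding dimN_def by simp

lemma alphaN_pos: "CARD('n::finite) \<ge> 2 \<Longrightarrow> alphaN TYPE('n) > 0"
  using volB_pos[where 'n='n] dimN_ge[where 'n='n]
  unfolding alphaN_def omega_def by simp

lemma alpha_p_lim:
  assumes "CARD('n::finite) \<ge> 2"
  shows "(alpha_p TYPE('n) \<longlongrightarrow> alphaN TYPE('n)) (at_left (dimN TYPE('n)))"
proof -
  define N where "N = dimN TYPE('n)"
  define A where "A = alphaN TYPE('n)"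
  define V where "V = volB TYPE('n)"
  have N2: "N \<ge> 2" unfolding N_def using dimN_ge[OF assms] .
  have A0: "A > 0" unfolding A_def using alphaN_pos[OF assms] .
  have V0: "V > 0" unfolding V_def using volB_pos .
  have "((\<lambda>q. (A powr ((N - 1) / N) * V powr (1/q - 1/N)) powr (q / (q - 1)))
      \<longlongrightarrow> (A powr ((N - 1) / N) * V powr (1/N - 1/N)) powr (N / (N - 1))) (at_left N)"
    by (intro tendsto_powr tendsto_intros) (use A0 V0 N2 in auto)
  moreover have "(A powr ((N - 1) / N) * V powr (1/N - 1/N)) powr (N / (N - 1)) = A"
    using A0 N2 V0 by (simp add: powr_powr)
  ultimately show ?thesis
    unfolding alpha_p_def[abs_def] N_def[symmetric] A_def[symmetric] V_def[symmetric] by simp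
qed
lemma Fp_lim:
  assumes "CARD('n::finite) \<ge> 2"
  shows "((\<lambda>q. Fp TYPE('n) q s) \<longlongrightarrow>
     exp (alphaN TYPE('n) * \<bar>s\<bar> powr (dimN TYPE('n) / (dimN TYPE('n) - 1)))) (at_left (dimN TYPE('n)))"
proof -
  define N where "N = dimN TYPE('n)"
  define L where "L = alphaN TYPE('n) * \<bar>s\<bar> powr (N / (N - 1))"
  define Y where "Y = (\<lambda>q. alpha_p TYPE('n) q * \<bar>s\<bar> powr (q / (q - 1)))"
  define t where "t = (\<lambda>q::real. (N - q) / (N * (q - 1)))"
  define G where "G = (\<lambda>q. ln (1 + t q * Y q) / t q)"
  have N2: "N \<ge> 2" unfolding N_def using dimN_ge[OF assms] .
  have Ylim: "(Y \<longlongrightarrow> L) (at_left N)"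
    unfolding Y_def L_def N_def
    by (intro tendsto_intros alpha_p_lim[OF assms]) (use N2 in \<open>auto simp: N_def\<close>)
  have tlim: "(t \<longlongrightarrow> 0) (at_left N)"
  proof -
    have "(t \<longlongrightarrow> (N - N) / (N * (N - 1))) (at_left N)"
      unfolding t_def by (intro tendsto_intros) (use N2 in auto)
    then show ?thesis by simp
  qed
  have ev1: "eventually (\<lambda>q. q \<in> {1<..<N}) (at_left N)"
    using N2 by (intro eventually_at_left_real) auto
  have tYlim: "((\<lambda>q. t q * Y q) \<longlongrightarrow> 0 * L) (at_left N)"
    by (intro tendsto_intros tlim Ylim)
  have ev2: "eventually (\<lambda>q. t q * Y q < 1) (at_left N)"
    using order_tendstoD(2)[OF tYlim, of 1] by simp
  have Y0: "Y q \<ge> 0" for q unfolding Y_def alpha_p_def by simp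
  have t0: "q \<in> {1<..<N} \<Longrightarrow> t q > 0" for q unfolding t_def by auto
  have up: "eventually (\<lambda>q. G q \<le> Y q) (at_left N)"
    using ev1
  proof eventually_elim
    case (elim q)
    have "ln (1 + t q * Y q) \<le> t q * Y q"
      using t0[OF elim] Y0[of q] by (intro ln_add_one_self_le_self) simp
    then show ?case unfolding G_def using t0[OF elim] by (simp add: divide_simps mult.commute)
  qed
  have low: "eventually (\<lambda>q. Y q - t q * (Y q)\<^sup>2 \<le> G q) (at_left N)"
    using ev1 ev2
  proof eventually_elim
    case (elim q)
    have "t q * Y q - (t q * Y q)\<^sup>2 \<le> ln (1 + t q * Y q)"
      using t0[of q] elim Y0[of q] by (intro ln_one_plus_pos_lower_bound) auto
    then show ?case unfolding G_def using t0[of q] elim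
      by (simp add: divide_simps power2_eq_square algebra_simps)
  qed
  have lowlim: "((\<lambda>q. Y q - t q * (Y q)\<^sup>2) \<longlongrightarrow> L - 0 * L\<^sup>2) (at_left N)"
    by (intro tendsto_intros tlim Ylim)
  have Glim: "(G \<longlongrightarrow> L) (at_left N)"
    using tendsto_sandwich[OF low up] lowlim Ylim by simp
  have eq: "eventually (\<lambda>q. exp (G q) = Fp TYPE('n) q s) (at_left N)"
    using ev1
  proof eventually_elim
    case (elim q)
    have pos: "0 < 1 + t q * Y q" using t0[OF elim] Y0[of q] by (simp add: add_pos_nonneg)
    have "Fp TYPE('n) q s = (1 + t q * Y q) powr (1 / t q)"
      unfolding Fp_def t_def Y_def N_def by (simp add: mult.assoc)
    also have "\<dots> = exp (G q)" using pos unfolding powr_def G_def by simp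
    finally show ?case by simp
  qed
  have "((\<lambda>q. exp (G q)) \<longlongrightarrow> exp L) (at_left N)"
    by (intro tendsto_intros Glim)
  then show ?thesis using tendsto_cong[OF eq] unfolding L_def N_def by simp
qed
lemma unitB_sets: "(unitB :: (real^'n::finite) set) \<in> sets lebesgue"
  and unitB_fin: "emeasure lebesgue (unitB :: (real^'n::finite) set) < \<infinity>"
  unfolding unitB_def using lmeasurable_ball[of "0::real^'n" 1]
  unfolding fmeasurable_def by auto

lemma si_bound:
  fixes h :: "real^'n::finite \<Rightarrow> real"
  assumes "h \<in> borel_measurable lebesgue" "\<And>x. x \<in> unitB \<Longrightarrow> \<bar>h x\<bar> \<le> K"
  shows "set_integrable lebesgue unitB h"
  unfolding set_integrable_def
proof (rule Bochner_Integration.integrable_bound)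
  show "integrable lebesgue (\<lambda>x. K * indicator unitB x)"
    using unitB_sets unitB_fin by (intro integrable_mult_right integrable_real_indicator) auto
  show "(\<lambda>x. indicator unitB x *\<^sub>R h x) \<in> borel_measurable lebesgue"
    using assms(1) unitB_sets by measurable
  show "AE x in lebesgue. norm (indicator unitB x *\<^sub>R h x) \<le> norm (K * indicator unitB x)"
    using assms(2) by (auto simp: indicator_def intro!: AE_I2 order_trans[OF _ abs_ge_self])
qed

lemma cont_meas: "continuous_on UNIV (u::real^'n::finite \<Rightarrow> real) \<Longrightarrow> u \<in> borel_measurable lebesgue"
  using continuous_imp_measurable_on_sets_lebesgue[of UNIV u] by simp

lemma cont_bdd:
  assumes "continuous_on UNIV (u::real^'n::finite \<Rightarrow> real)"
  obtains M where "M \<ge> 0" "\<And>x. x \<in> unitB \<Longrightarrow> \<bar>u x\<bar> \<le> M"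
proof -
  have "compact (u ` cball 0 1)"
    by (rule compact_continuous_image) (use assms continuous_on_subset in auto)
  then obtain M where M: "\<And>y. y \<in> u ` cball 0 1 \<Longrightarrow> norm y \<le> M"
    using compact_imp_bounded bounded_iff by metis
  show ?thesis
  proof
    show "\<bar>u x\<bar> \<le> max 0 M" if "x \<in> unitB" for x
      using M[of "u x"] that unfolding unitB_def by auto
  qed simp
qed
lemma Fp_le_exp:
  assumes "1 < q" "q < dimN TYPE('n::finite)"
  shows "Fp TYPE('n) q s \<le> exp (alpha_p TYPE('n) q * \<bar>s\<bar> powr (q / (q - 1)))"
proof -
  define N where "N = dimN TYPE('n)"
  define Y where "Y = alpha_p TYPE('n) q * \<bar>s\<bar> powr (q / (q - 1))"
  define t where "t = (N - q) / (N * (q - 1))"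
  have t0: "t > 0" unfolding t_def N_def using assms by auto
  have Y0: "Y \<ge> 0" unfolding Y_def alpha_p_def by simp
  have pos: "0 < 1 + t * Y" using t0 Y0 by (simp add: add_pos_nonneg)
  have "Fp TYPE('n) q s = (1 + t * Y) powr (1 / t)"
    unfolding Fp_def t_def Y_def N_def by (simp add: mult.assoc)
  also have "\<dots> = exp (ln (1 + t * Y) / t)" using pos unfolding powr_def by simp
  also have "\<dots> \<le> exp Y"
  proof -
    have "ln (1 + t * Y) \<le> t * Y" using t0 Y0 by (intro ln_add_one_self_le_self) simp
    then show ?thesis using t0 by (simp add: divide_simps mult.commute)
  qed
  finally show ?thesis unfolding Y_def .
qed

lemma Fp_nonneg: "Fp t q s \<ge> 0" unfolding Fp_def by simp

theorem proposition1p1: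
  fixes p :: real
  assumes N2: "CARD('n) \<ge> 2"
    and p1: "1 < p" and pN: "p < dimN TYPE('n)"
  shows "\<exists>c1 c2. c1 > 0 \<and> c2 > 0 \<and>
           (\<forall>u :: real ^ 'n \<Rightarrow> real. smooth u \<and> compact_support_in u unitB \<longrightarrow>
              c1 * ((LINT x:unitB|lebesgue. \<bar>u x\<bar> powr pstar TYPE('n) p) + volB TYPE('n))
                \<le> (LINT x:unitB|lebesgue. Fp TYPE('n) p (u x)) \<and>
              (LINT x:unitB|lebesgue. Fp TYPE('n) p (u x))
                \<le> c2 * ((LINT x:unitB|lebesgue. \<bar>u x\<bar> powr pstar TYPE('n) p) + volB TYPE('n)))
         \<and> (\<forall>u :: real ^ 'n \<Rightarrow> real. smooth u \<and> compact_support_in u unitB \<longrightarrow>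
              ((\<lambda>q. LINT x:unitB|lebesgue. Fp TYPE('n) q (u x))
                 \<longlongrightarrow> (LINT x:unitB|lebesgue.
                        exp (alphaN TYPE('n) * \<bar>u x\<bar> powr (dimN TYPE('n) / (dimN TYPE('n) - 1)))))
               (at_left (dimN TYPE('n))))"
proof -
  define N where "N = dimN TYPE('n)"
  define A where "A = alphaN TYPE('n)"
  define a where "a = (N - p) / (N * (p - 1)) * alpha_p TYPE('n) p"
  define e where "e = N * (p - 1) / (N - p)"
  define c1 where "c1 = min 1 (a powr e) / 2"
  define c2 where "c2 = 2 powr e * max 1 (a powr e)"
  have N2': "N \<ge> 2" unfolding N_def using dimN_ge[OF N2] .
  have pN': "p < N" using pN unfolding N_def .
  have A0: "A > 0" unfolding A_def using alphaN_pos[OF N2] .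
  have V0: "volB TYPE('n) > 0" using volB_pos .
  have ap0: "alpha_p TYPE('n) p > 0"
    unfolding alpha_p_def using A0 V0 unfolding A_def by simp
  have a0: "a > 0" unfolding a_def using ap0 p1 pN' by simp
  have c10: "c1 > 0" unfolding c1_def using a0 by simp
  have c20: "c2 > 0" unfolding c2_def by simp
  have Fpe: "Fp TYPE('n) p s = (1 + a * \<bar>s\<bar> powr (p / (p - 1))) powr e" for s
    unfolding Fp_def a_def e_def N_def ..
  have pst: "pstar TYPE('n) p = N * p / (N - p)" unfolding pstar_def N_def ..
  have volI: "volB TYPE('n) = (LINT x:(unitB :: (real^'n) set)|lebesgue. 1)"
    unfolding volB_def using set_integral_const[OF unitB_sets[where 'n='n], of "1::real"] unitB_fin[where 'n='n]
    by (simp add: less_top)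
  have part1: "c1 * ((LINT x:unitB|lebesgue. \<bar>u x\<bar> powr pstar TYPE('n) p) + volB TYPE('n))
                \<le> (LINT x:unitB|lebesgue. Fp TYPE('n) p (u x)) \<and>
              (LINT x:unitB|lebesgue. Fp TYPE('n) p (u x))
                \<le> c2 * ((LINT x:unitB|lebesgue. \<bar>u x\<bar> powr pstar TYPE('n) p) + volB TYPE('n))"
    if cu: "continuous_on UNIV u" for u :: "real^'n \<Rightarrow> real"
  proof -
    have um: "u \<in> borel_measurable lebesgue" using cont_meas[OF cu] .
    obtain M where M0: "M \<ge> 0" and M: "\<And>x. x \<in> unitB \<Longrightarrow> \<bar>u x\<bar> \<le> M"
      using cont_bdd[OF cu] by blast
    have i1: "set_integrable lebesgue unitB (\<lambda>x. \<bar>u x\<bar> powr pstar TYPE('n) p)"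
    proof (rule si_bound)
      show "(\<lambda>x. \<bar>u x\<bar> powr pstar TYPE('n) p) \<in> borel_measurable lebesgue" using um by measurable
      fix x :: "real^'n" assume "x \<in> unitB"
      then show "\<bar>\<bar>u x\<bar> powr pstar TYPE('n) p\<bar> \<le> max 1 M powr pstar TYPE('n) p"
        using M[of x] p1 pN' unfolding pst by (auto intro!: powr_mono2)
    qed
    have i2: "set_integrable lebesgue unitB (\<lambda>x. 1::real)"
      by (rule si_bound[where K=1]) auto
    have i3: "set_integrable lebesgue unitB (\<lambda>x. Fp TYPE('n) p (u x))"
    proof (rule si_bound)
      show "(\<lambda>x. Fp TYPE('n) p (u x)) \<in> borel_measurable lebesgue"
        unfolding Fp_def using um by measurable
      fix x :: "real^'n" assume "x \<in> unitB"
      then show "\<bar>Fp TYPE('n) p (u x)\<bar> \<le> c2 * (max 1 M powr pstar TYPE('n) p + 1)"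
      proof -
        assume x: "x \<in> unitB"
        have "\<bar>u x\<bar> powr (N * p / (N - p)) \<le> max 1 M powr (N * p / (N - p))"
          using M[OF x] p1 pN' by (intro powr_mono2) auto
        then have "c2 * (\<bar>u x\<bar> powr (N * p / (N - p)) + 1) \<le> c2 * (max 1 M powr (N * p / (N - p)) + 1)"
          using c20 by simp
        then show ?thesis
          using F_bounds(2)[OF p1 pN' a0, of "u x"] Fp_nonneg[of _ p "u x"]
          unfolding Fpe e_def[symmetric] pst c2_def[symmetric] by simp
      qed
    qed
    have sumI: "(LINT x:unitB|lebesgue. \<bar>u x\<bar> powr pstar TYPE('n) p) + volB TYPE('n)
        = (LINT x:unitB|lebesgue. \<bar>u x\<bar> powr pstar TYPE('n) p + 1)"
      unfolding volI using set_integral_add(2)[OF i1 i2] by simp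
    have iS: "set_integrable lebesgue unitB (\<lambda>x. \<bar>u x\<bar> powr pstar TYPE('n) p + 1)"
      using set_integral_add(1)[OF i1 i2] .
    have "c1 * (LINT x:unitB|lebesgue. \<bar>u x\<bar> powr pstar TYPE('n) p + 1)
        = (LINT x:unitB|lebesgue. c1 * (\<bar>u x\<bar> powr pstar TYPE('n) p + 1))" by simp
    also have "\<dots> \<le> (LINT x:unitB|lebesgue. Fp TYPE('n) p (u x))"
      by (rule set_integral_mono[OF _ i3]) (use iS F_bounds(1)[OF p1 pN' a0] in
           \<open>auto simp: Fpe pst c1_def e_def\<close>)
    finally have L: "c1 * (LINT x:unitB|lebesgue. \<bar>u x\<bar> powr pstar TYPE('n) p + 1)
        \<le> (LINT x:unitB|lebesgue. Fp TYPE('n) p (u x))" .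
    have "(LINT x:unitB|lebesgue. Fp TYPE('n) p (u x))
        \<le> (LINT x:unitB|lebesgue. c2 * (\<bar>u x\<bar> powr pstar TYPE('n) p + 1))"
      by (rule set_integral_mono[OF i3]) (use iS F_bounds(2)[OF p1 pN' a0] in
           \<open>auto simp: Fpe pst c2_def e_def\<close>)
    also have "\<dots> = c2 * (LINT x:unitB|lebesgue. \<bar>u x\<bar> powr pstar TYPE('n) p + 1)" by simp
    finally show ?thesis using L unfolding sumI by simp
  qed
  have part2: "((\<lambda>q. LINT x:unitB|lebesgue. Fp TYPE('n) q (u x))
                 \<longlongrightarrow> (LINT x:unitB|lebesgue.
                        exp (alphaN TYPE('n) * \<bar>u x\<bar> powr (dimN TYPE('n) / (dimN TYPE('n) - 1)))))
               (at_left (dimN TYPE('n)))"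
    if cu: "continuous_on UNIV u" for u :: "real^'n \<Rightarrow> real"
  proof -
    have um: "u \<in> borel_measurable lebesgue" using cont_meas[OF cu] .
    obtain M where M0: "M \<ge> 0" and M: "\<And>x. x \<in> unitB \<Longrightarrow> \<bar>u x\<bar> \<le> M"
      using cont_bdd[OF cu] by blast
    define R where "R = N / (N - 1) + 1"
    define K where "K = exp ((A + 1) * max 1 M powr R)"
    define P where "P = (\<lambda>q. q \<in> {1<..<N} \<and> alpha_p TYPE('n) q < A + 1 \<and> q / (q - 1) < R)"
    have evP: "eventually P (at_left N)"
    proof -
      have e1: "eventually (\<lambda>q. q \<in> {1<..<N}) (at_left N)"
        using N2' by (intro eventually_at_left_real) auto
      have e2: "eventually (\<lambda>q. alpha_p TYPE('n) q < A + 1) (at_left N)"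
        using order_tendstoD(2)[OF alpha_p_lim[OF N2], of "A + 1"] unfolding A_def N_def by simp
      have "((\<lambda>q. q / (q - 1)) \<longlongrightarrow> N / (N - 1)) (at_left N)"
        by (intro tendsto_intros) (use N2' in auto)
      then have e3: "eventually (\<lambda>q. q / (q - 1) < R) (at_left N)"
        using order_tendstoD(2)[of _ "N / (N - 1)" _ R] unfolding R_def by simp
      show ?thesis using e1 e2 e3 unfolding P_def by eventually_elim auto
    qed
    then obtain b where bN: "b < N" and bP: "\<And>y. b < y \<Longrightarrow> y < N \<Longrightarrow> P y"
      using eventually_at_left[of 1 N P] N2' by auto
    have bound: "\<bar>Fp TYPE('n) q (u x)\<bar> \<le> K" if "P q" "x \<in> unitB" for q x
    proof -
      from that(1) have q: "1 < q" "q < N" "alpha_p TYPE('n) q < A + 1" "q / (q - 1) < R"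
        unfolding P_def by auto
      have r0: "q / (q - 1) \<ge> 0" using q by simp
      have "\<bar>u x\<bar> powr (q / (q - 1)) \<le> max 1 M powr (q / (q - 1))"
        using M[OF that(2)] r0 by (intro powr_mono2) auto
      also have "\<dots> \<le> max 1 M powr R" using q by (intro powr_mono) auto
      finally have h1: "\<bar>u x\<bar> powr (q / (q - 1)) \<le> max 1 M powr R" .
      have ap: "alpha_p TYPE('n) q \<ge> 0" unfolding alpha_p_def by simp
      have "alpha_p TYPE('n) q * \<bar>u x\<bar> powr (q / (q - 1)) \<le> (A + 1) * max 1 M powr R"
        using q(3) h1 ap by (intro mult_mono) auto
      then have "exp (alpha_p TYPE('n) q * \<bar>u x\<bar> powr (q / (q - 1))) \<le> K"
        unfolding K_def by simp
      moreover have "Fp TYPE('n) q (u x) \<le> exp (alpha_p TYPE('n) q * \<bar>u x\<bar> powr (q / (q - 1)))"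
        using q unfolding N_def by (intro Fp_le_exp) auto
      ultimately show ?thesis using Fp_nonneg[of "TYPE('n)" q "u x"] by linarith
    qed
    show ?thesis
      unfolding N_def[symmetric]
    proof (rule tendsto_at_left_sequentially[OF bN])
      fix S :: "nat \<Rightarrow> real"
      assume SN: "\<And>n. S n < N" and Sb: "\<And>n. b < S n" and Slim: "S \<longlonglongrightarrow> N"
      have SF: "filterlim S (at_left N) sequentially"
        unfolding filterlim_at using SN Slim by (auto intro!: always_eventually simp: less_imp_neq)
      show "(\<lambda>n. LINT x:unitB|lebesgue. Fp TYPE('n) (S n) (u x)) \<longlonglongrightarrow>
          (LINT x:unitB|lebesgue. exp (alphaN TYPE('n) * \<bar>u x\<bar> powr (N / (N - 1))))"
        unfolding set_lebesgue_integral_def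
      proof (rule integral_dominated_convergence[where w = "\<lambda>x::real^'n. K * indicator unitB x"])
        show "(\<lambda>x. indicator unitB x *\<^sub>R exp (alphaN TYPE('n) * \<bar>u x\<bar> powr (N / (N - 1))))
            \<in> borel_measurable lebesgue"
          using um unitB_sets[where 'n='n] by measurable
        show "(\<lambda>x. indicator unitB x *\<^sub>R Fp TYPE('n) (S i) (u x)) \<in> borel_measurable lebesgue" for i
          using um unitB_sets[where 'n='n] unfolding Fp_def by measurable
        show "integrable lebesgue (\<lambda>x::real^'n. K * indicator unitB x)"
          using unitB_sets[where 'n='n] unitB_fin[where 'n='n]
          by (intro integrable_mult_right integrable_real_indicator) auto
        show "AE x in lebesgue. (\<lambda>i. indicator unitB x *\<^sub>R Fp TYPE('n) (S i) (u x)) \<longlonglongrightarrow>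
            indicator unitB x *\<^sub>R exp (alphaN TYPE('n) * \<bar>u x\<bar> powr (N / (N - 1)))"
        proof (rule AE_I2)
          fix x :: "real^'n"
          have "(\<lambda>i. Fp TYPE('n) (S i) (u x)) \<longlonglongrightarrow> exp (alphaN TYPE('n) * \<bar>u x\<bar> powr (N / (N - 1)))"
            using filterlim_compose[OF Fp_lim[OF N2, of "u x"] SF[unfolded N_def]] unfolding N_def .
          then show "(\<lambda>i. indicator unitB x *\<^sub>R Fp TYPE('n) (S i) (u x)) \<longlonglongrightarrow>
            indicator unitB x *\<^sub>R exp (alphaN TYPE('n) * \<bar>u x\<bar> powr (N / (N - 1)))"
            by (intro tendsto_intros)
        qed
        show "AE x in lebesgue. norm (indicator unitB x *\<^sub>R Fp TYPE('n) (S i) (u x)) \<le> K * indicator unitB x" for i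
          using bound[OF bP[OF Sb SN]] by (intro AE_I2) (auto simp: indicator_def)
      qed
    qed
  qed
  have sm: "continuous_on UNIV u" if "smooth u" for u :: "real^'n \<Rightarrow> real"
    using that unfolding smooth_def by (metis Ck.simps(1))
  show ?thesis
    apply (rule exI[of _ c1], rule exI[of _ c2])
    using c10 c20 part1 part2 sm by blast
qed

end
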